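(* Assume $V=W$, that $\mathcal{A}$ is coercive with constant $\alpha>0$ (i.e. $\alpha\|\phi\|_W^2\le\mathcal{A}(\phi,\phi)$ for all $\phi\in W$), and that $W_\theta\cup S_\theta\subseteq V_\eta$. Let $(\tilde w^n_\theta)\subset W_\theta$ be a minimizing sequence, i.e. $\lim_n\|u-\tilde w^n_\theta\|_{op,\eta}=\inf_{w_\theta\in W_\theta}\|u-w_\theta\|_{op,\eta}$, which converges weakly in $W$ to $u^*_\theta\in\mathrm{cl}^{seq}_w(W_\theta)$. Then $$\|u-u^*_\theta\|_W\le\Big(1+\frac{2M}{\alpha}\Big)\inf_{w_\theta\in W_\theta}\|u-w_\theta\|_W.$$
   Context: $W$ and $V$ are reflexive separable real Banach spaces (here $V=W$, a Hilbert space with scalar product $(\cdot,\cdot)_W$). $\mathcal{A}:W\times V\to\mathbb{R}$ is a bilinear form with $\mathcal{A}(w,v)\le M\|w\|_W\|v\|_V$ for all $w,v$, $\mathcal{F}:V\to\mathbb{R}$ is bounded linear, and $u\in W$ is the unique solution of $\mathcal{A}(u,v)=\mathcal{F}(v)$ for all $v\in V$. $W_\theta\subseteq W$ and $V_\eta\subseteq V$ are arbitrary subsets, $V_\eta$ containing an element of nonzero norm. For $w\in W$, $\|w\|_{op,\eta}:=\sup_{v_\eta\in V_\eta,\ \|v_\eta\|_V\neq0}\mathcal{A}(w,v_\eta)/\|v_\eta\|_V$. $S_\theta:=\{w_1-w_2:\ w_1,w_2\in W_\theta\}$. $\mathrm{cl}^{seq}_w(W_\theta)$ is the set of all weak limits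 in $W$ of sequences in $W_\theta$. *)

theory Defs
  imports "HOL-Analysis.Analysis"
begin

definition weak_conv :: "(nat \<Rightarrow> 'a::real_normed_vector) \<Rightarrow> 'a \<Rightarrow> bool" where
  "weak_conv x y \<longleftrightarrow> (\<forall>f::'a \<Rightarrow> real. bounded_linear f \<longrightarrow> (\<lambda>n. f (x n)) \<longlonglongrightarrow> f y)"

definition seq_weak_closure :: "'a::real_normed_vector set \<Rightarrow> 'a set" where
  "seq_weak_closure S = {y. \<exists>x. (\<forall>n. x n \<in> S) \<and> weak_conv x y}"

definition op_norm_eta :: "('a::real_normed_vector \<Rightarrow> 'b::real_normed_vector \<Rightarrow> real) \<Rightarrow> 'b set \<Rightarrow> 'a \<Rightarrow> real" where
  "op_norm_eta A Veta w = (SUP v \<in> {v \<in> Veta. norm v \<noteq> 0}. A w v / norm v)"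

definition diff_set :: "'a::ab_group_add set \<Rightarrow> 'a set" where
  "diff_set S = {w1 - w2 | w1 w2. w1 \<in> S \<and> w2 \<in> S}"

end

theory Submission
  imports Defs
begin

lemma op_upper:
  fixes A :: "'a::real_normed_vector \<Rightarrow> 'a \<Rightarrow> real"
  assumes bound: "\<forall>w v. A w v \<le> M * norm w * norm v"
    and v: "v \<in> Veta" "norm v \<noteq> 0"
  shows "A x v / norm v \<le> op_norm_eta A Veta x"
  unfolding op_norm_eta_def
proof (rule cSUP_upper)
  show "v \<in> {v \<in> Veta. norm v \<noteq> 0}" using v by auto
  show "bdd_above ((\<lambda>v. A x v / norm v) ` {v \<in> Veta. norm v \<noteq> 0})"
  proof (rule bdd_aboveI2)
    fix y assume "y \<in> {v \<in> Veta. norm v \<noteq> 0}"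
    then have "norm y > 0" by auto
    moreover have "A x y \<le> M * norm x * norm y" using bound by auto
    ultimately show "A x y / norm y \<le> M * norm x" by (simp add: divide_le_eq)
  qed
qed

lemma op_le:
  fixes A :: "'a::real_normed_vector \<Rightarrow> 'a \<Rightarrow> real"
  assumes bound: "\<forall>w v. A w v \<le> M * norm w * norm v"
    and nz: "\<exists>v \<in> Veta. norm v \<noteq> 0"
  shows "op_norm_eta A Veta x \<le> M * norm x"
  unfolding op_norm_eta_def
proof (rule cSUP_least)
  show "{v \<in> Veta. norm v \<noteq> 0} \<noteq> {}" using nz by auto
  fix y assume "y \<in> {v \<in> Veta. norm v \<noteq> 0}"
  then have "norm y > 0" by auto
  moreover have "A x y \<le> M * norm x * norm y" using bound by auto
  ultimately show "A x y / norm y \<le> M * norm x" by (simp add: divide_le_eq)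
qed

theorem lemma2:
  fixes A :: "'a::{real_inner, complete_space} \<Rightarrow> 'a \<Rightarrow> real"
    and F :: "'a \<Rightarrow> real"
    and u ustar :: 'a
    and Wtheta Veta :: "'a set"
    and wt :: "nat \<Rightarrow> 'a"
    and M \<alpha> :: real
  assumes separable: "\<exists>D. countable D \<and> closure D = (UNIV :: 'a set)"
    and bil: "bilinear A"
    and bound: "\<forall>w v. A w v \<le> M * norm w * norm v"
    and F_lin: "bounded_linear F"
    and sol: "\<forall>v. A u v = F v"
    and sol_unique: "\<forall>w. (\<forall>v. A w v = F v) \<longrightarrow> w = u"
    and Veta_nz: "\<exists>v \<in> Veta. norm v \<noteq> 0"
    and alpha_pos: "\<alpha> > 0"
    and coercive: "\<forall>\<phi>. \<alpha> * (norm \<phi>)\<^sup>2 \<le> A \<phi> \<phi>"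
    and incl: "Wtheta \<union> diff_set Wtheta \<subseteq> Veta"
    and wt_in: "\<forall>n. wt n \<in> Wtheta"
    and minimizing: "(\<lambda>n. op_norm_eta A Veta (u - wt n)) \<longlonglongrightarrow>
                       (INF w \<in> Wtheta. op_norm_eta A Veta (u - w))"
    and weak: "weak_conv wt ustar"
    and ustar_in: "ustar \<in> seq_weak_closure Wtheta"
  shows "norm (u - ustar) \<le> (1 + 2 * M / \<alpha>) * (INF w \<in> Wtheta. norm (u - w))"
proof -
  let ?op = "op_norm_eta A Veta"
  let ?L = "INF w \<in> Wtheta. ?op (u - w)"
  obtain v0 where v0: "v0 \<in> Veta" "norm v0 \<noteq> 0" using Veta_nz by auto
  have Mge: "M \<ge> \<alpha>"
  proof -
    have "\<alpha> * (norm v0)\<^sup>2 \<le> M * (norm v0)\<^sup>2"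
      using coercive[rule_format, of v0] bound[rule_format, of v0 v0] by (simp add: power2_eq_square algebra_simps)
    moreover have "(norm v0)\<^sup>2 > 0" using v0 by simp
    ultimately show ?thesis by simp
  qed
  have opge: "?op x \<ge> - M * norm x" for x
  proof -
    have "A x v0 / norm v0 \<le> ?op x" using op_upper[OF bound v0] .
    moreover have "- A x v0 \<le> M * norm x * norm v0"
      using bound[rule_format, of "-x" v0] bilinear_lneg[OF bil, of x v0] by simp
    moreover have "norm v0 > 0" using v0 by simp
    moreover have "- M * norm x \<le> A x v0 / norm v0"
      using calculation(2,3) by (simp add: pos_le_divide_eq)
    ultimately show ?thesis by linarith
  qed
  have bdd: "bdd_below ((\<lambda>w. ?op (u - w)) ` Wtheta)"
  proof (cases "\<forall>w\<in>Wtheta. w = wt 0")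
    case True
    then have "(\<lambda>w. ?op (u - w)) ` Wtheta = {?op (u - wt 0)}" using wt_in by auto
    then show ?thesis by simp
  next
    case False
    then obtain w1 where w1: "w1 \<in> Wtheta" "w1 \<noteq> wt 0" by auto
    define d where "d = w1 - wt 0"
    have dV: "d \<in> Veta" "- d \<in> Veta"
      using incl w1 wt_in unfolding diff_set_def d_def by fastforce+
    have dnz: "norm d \<noteq> 0" "norm (-d) \<noteq> 0" using w1 d_def by auto
    have "?op x \<ge> 0" for x
    proof -
      have a: "A x d / norm d \<le> ?op x" using op_upper[OF bound dV(1) dnz(1)] .
      have b: "A x (-d) / norm (-d) \<le> ?op x" using op_upper[OF bound dV(2) dnz(2)] .
      have "A x (-d) = - A x d" by (rule bilinear_rneg[OF bil])
      then have "A x (-d) / norm (-d) = - (A x d / norm d)" by simp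
      with a b show ?thesis by linarith
    qed
    then show ?thesis by (intro bdd_belowI[of _ 0]) auto
  qed
  have Lle: "?L \<le> M * norm (u - w)" if "w \<in> Wtheta" for w
  proof -
    have "?L \<le> ?op (u - w)" by (rule cINF_lower[OF bdd that])
    also have "\<dots> \<le> M * norm (u - w)" by (rule op_le[OF bound Veta_nz])
    finally show ?thesis .
  qed
  have key: "norm (w - ustar) \<le> 2 * M / \<alpha> * norm (u - w)" if w: "w \<in> Wtheta" for w
  proof -
    have step: "\<alpha> * norm (w - wt n) \<le> M * norm (u - w) + ?op (u - wt n)" for n
    proof (cases "w = wt n")
      case True
      then show ?thesis using opge[of "u - wt n"] by simp
    next
      case False
      define d where "d = w - wt n"
      have dV: "d \<in> Veta" using incl w wt_in unfolding diff_set_def d_def by fastforce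
      have dpos: "norm d > 0" using False d_def by auto
      have "\<alpha> * (norm d)\<^sup>2 \<le> A d d" using coercive by auto
      also have "A d d = A (w - u) d + A (u - wt n) d"
        unfolding d_def by (simp add: bilinear_lsub[OF bil] bilinear_ladd[OF bil])
      also have "A (w - u) d \<le> M * norm (u - w) * norm d"
        using bound[rule_format, of "w - u" d] by (simp add: norm_minus_commute)
      also have "A (u - wt n) d \<le> ?op (u - wt n) * norm d"
        using op_upper[OF bound dV, of "u - wt n"] dpos by (simp add: divide_le_eq)
      finally have "\<alpha> * norm d * norm d \<le> (M * norm (u - w) + ?op (u - wt n)) * norm d"
        by (simp add: power2_eq_square algebra_simps)
      then show ?thesis using dpos d_def by simp
    qed
    define f where "f = (\<lambda>x. inner (w - ustar) x)"
    have fbl: "bounded_linear f" unfolding f_def by (rule bounded_linear_inner_right)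
    have "(\<lambda>n. f (wt n)) \<longlonglongrightarrow> f ustar" using weak fbl unfolding weak_conv_def by auto
    then have lim1: "(\<lambda>n. f w - f (wt n)) \<longlonglongrightarrow> (norm (w - ustar))\<^sup>2"
    proof -
      have "(\<lambda>n. f w - f (wt n)) \<longlonglongrightarrow> f w - f ustar" by (rule tendsto_diff[OF tendsto_const \<open>_ \<longlonglongrightarrow> f ustar\<close>])
      moreover have "f w - f ustar = (norm (w - ustar))\<^sup>2"
        unfolding f_def by (simp add: inner_diff_right[symmetric] power2_norm_eq_inner)
      ultimately show ?thesis by simp
    qed
    have lim2: "(\<lambda>n. norm (w - ustar) * ((M * norm (u - w) + ?op (u - wt n)) / \<alpha>))
        \<longlonglongrightarrow> norm (w - ustar) * ((M * norm (u - w) + ?L) / \<alpha>)"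
      by (intro tendsto_intros minimizing) (use alpha_pos in auto)
    have ineq: "f w - f (wt n) \<le> norm (w - ustar) * ((M * norm (u - w) + ?op (u - wt n)) / \<alpha>)" for n
    proof -
      have "f w - f (wt n) = inner (w - ustar) (w - wt n)" unfolding f_def by (simp add: inner_diff_right)
      also have "\<dots> \<le> norm (w - ustar) * norm (w - wt n)" by (rule norm_cauchy_schwarz)
      also have "\<dots> \<le> norm (w - ustar) * ((M * norm (u - w) + ?op (u - wt n)) / \<alpha>)"
        using step[of n] alpha_pos by (intro mult_left_mono) (auto simp: le_divide_eq mult.commute)
      finally show ?thesis .
    qed
    have "(norm (w - ustar))\<^sup>2 \<le> norm (w - ustar) * ((M * norm (u - w) + ?L) / \<alpha>)"
      by (rule LIMSEQ_le[OF lim1 lim2]) (use ineq in auto)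
    also have "\<dots> \<le> norm (w - ustar) * ((2 * M * norm (u - w)) / \<alpha>)"
      using Lle[OF w] alpha_pos by (intro mult_left_mono divide_right_mono) auto
    finally have "norm (w - ustar) * norm (w - ustar) \<le> norm (w - ustar) * ((2 * M * norm (u - w)) / \<alpha>)"
      by (simp add: power2_eq_square)
    then show ?thesis
    proof (cases "norm (w - ustar) = 0")
      case True
      then show ?thesis using Mge alpha_pos by simp
    next
      case False
      then have "norm (w - ustar) > 0" by simp
      with \<open>norm (w - ustar) * norm (w - ustar) \<le> _\<close> have "norm (w - ustar) \<le> (2 * M * norm (u - w)) / \<alpha>"
        using mult_le_cancel_left_pos[of "norm (w - ustar)" "norm (w - ustar)" "(2 * M * norm (u - w)) / \<alpha>"]
        by blast
      then show ?thesis by simp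
    qed
  qed
  define c where "c = 1 + 2 * M / \<alpha>"
  have cpos: "c > 0" unfolding c_def using Mge alpha_pos by (simp add: add_pos_nonneg)
  have "norm (u - ustar) / c \<le> (INF w \<in> Wtheta. norm (u - w))"
  proof (rule cINF_greatest)
    show "Wtheta \<noteq> {}" using wt_in by auto
    fix w assume w: "w \<in> Wtheta"
    have "norm (u - ustar) \<le> norm (u - w) + norm (w - ustar)" using norm_triangle_ineq[of "u - w" "w - ustar"] by simp
    also have "\<dots> \<le> c * norm (u - w)" using key[OF w] unfolding c_def by (simp add: algebra_simps)
    finally show "norm (u - ustar) / c \<le> norm (u - w)" using cpos by (simp add: divide_le_eq mult.commute)
  qed
  then show ?thesis using cpos unfolding c_def[symmetric] by (simp add: divide_le_eq mult.commute)
qed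

end
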